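(* Let $v^1,\dots,v^k$ be a basis of $\mathfrak h^*$, $G^{ab}=(v^a|v^b)$, and $(G_{ab})$ the inverse matrix of $(G^{ab})$. For a real root $\alpha=\sum_a\alpha_av^a$ define, for $a,b,c,d\in\{1,\dots,k\}$, $$X(\alpha)_{ab\,cd}=\tfrac12\alpha_a\alpha_b\alpha_c\alpha_d-\alpha_{(a}G_{b)(c}\alpha_{d)}+\tfrac14G_{a(c}G_{d)b},$$ where $\alpha_{(a}G_{b)(c}\alpha_{d)}:=\frac14(\alpha_aG_{bc}\alpha_d+\alpha_bG_{ac}\alpha_d+\alpha_aG_{bd}\alpha_c+\alpha_bG_{ad}\alpha_c)$ and $G_{a(c}G_{d)b}:=\frac12(G_{ac}G_{db}+G_{ad}G_{cb})$. Then for all real roots $\alpha,\beta$ with $(\alpha|\beta)=0$, $$\sum_{e,f,g,h=1}^k\big(X(\alpha)_{ab\,ef}G^{eg}G^{fh}X(\beta)_{gh\,cd}-X(\beta)_{ab\,ef}G^{eg}G^{fh}X(\alpha)_{gh\,cd}\big)=0$$ for all $a,b,c,d$, and for all real roots $\alpha,\beta$ with $(\alpha|\beta)=\mp1$, $$\sum_{e,f,g,h=1}^k\big(X(\alpha)_{ab\,ef}G^{eg}G^{fh}X(\beta)_{gh\,cd}+X(\beta)_{ab\,ef}G^{eg}G^{fh}X(\alpha)_{gh\,cd}\big)=\tfrac12X(\alpha\pm\beta)_{ab\,cd}.$$ In particular, with the Clifford algebra $\mathcal S$ and elements $\phi^{ab}_\gamma$ defined below and $\widehat J(\alpha_i):=\sum_{a,b,c,d=1}^k\sum_{\gamma,\delta=1}^lX(\alpha_i)_{ab\,cd}\Gamma(\alpha_i)_{\gamma\delta}\phi^{ab}_\gamma\phi^{cd}_\delta$,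 the assignment $X_i\mapsto\widehat J(\alpha_i)$ extends to a Lie algebra homomorphism $\mathfrak k\to(\mathcal S,[\cdot,\cdot])$, i.e. a finite-dimensional representation of $\mathfrak k$.
   Context: Let $A=(a_{ij})_{1\le i,j\le n}$ be a symmetrizable simply laced generalized Cartan matrix (off-diagonal entries $0$ or $-1$); the Dynkin diagram has an edge between $i\ne j$ iff $a_{ij}=-1$. Let $\mathfrak g$ be the split real Kac–Moody algebra of $A$ with Chevalley generators $e_i,f_i$, Cartan subalgebra $\mathfrak h$ (from a real realization), simple roots $\alpha_1,\dots,\alpha_n\in\mathfrak h^*$, real roots $\Delta^{\mathrm{re}}$, and let $(\cdot|\cdot)$ be the nondegenerate invariant symmetric bilinear form induced on $\mathfrak h^*$, with $(\alpha_i|\alpha_j)=a_{ij}$. Let $\mathfrak k$ be the fixed-point subalgebra of the Chevalley involution ($e_i\mapsto -f_i$, $f_i\mapsto-e_i$, $h\mapsto -h$), with Berman generators $X_i=e_i-f_i$; $\mathfrak k$ is presented by generators $X_1,\dots,X_n$ and relations $[X_i,[X_i,X_j]]=-X_j$ if $a_{ij}=-1$, $[X_i,X_j]=0$ if $a_{ij}=0$. A generalized spin representation is a representation $\rho$ of $\mathfrak k$ with $\rho(X_i)^2=-\frac14\mathrm{id}$. Fix a finite-dimensional real vector space $S$ with positive definite inner product $q_2$ and orthonormal basis $f_1,\dots,f_l$, and a generalized spin representation $\rho:\mathfrak k\to\mathrm{End}(S)$ whose values $\rho(X_i)$ are anti-symmetric real matrices in this basis (such exist, e.g. by realifying the generalized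 spin representations with compact image of Hainke–Köhl–Levy); put $\Gamma(\alpha_i):=2\rho(X_i)$. Let $W=\mathrm{Sym}^2(\mathfrak h^* )$ (symmetric tensors in $\mathfrak h^*\otimes\mathfrak h^*$) with the symmetric bilinear form $q_1$ obtained by restricting $(\cdot|\cdot)\otimes(\cdot|\cdot)$; let $q=q_1\otimes q_2$ on $W\otimes S$, and $\mathcal S$ the Clifford algebra of $W\otimes S$: the tensor algebra modulo the ideal generated by $w\otimes w-\frac12q(w,w)\cdot1$. Put $\phi^{ab}_\gamma:=\frac12(v^a\otimes v^b+v^b\otimes v^a)\otimes f_\gamma\in\mathcal S$. *)

theory Defs
  imports "HOL-Analysis.Analysis"
begin

text \<open>The dual Cartan subalgebra h* is identified with real^'k via the
coordinates with respect to the chosen basis v^1..v^k; thus a vector x has coordinates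
x $ a (the alpha_a of the paper), and the invariant form is given by the Gram matrix
Gup = (G^{ab}) = ((v^a|v^b)).  Simple roots are indexed by the finite type 'n, the
orthonormal basis of S by the finite type 'l.\<close>

definition ip :: "real^'k^'k \<Rightarrow> real^'k \<Rightarrow> real^'k \<Rightarrow> real" where
  "ip Gup x y = (\<Sum>a\<in>UNIV. \<Sum>b\<in>UNIV. x $ a * Gup $ a $ b * y $ b)"

text \<open>Simple reflection s_i(lambda) = lambda - <lambda, alpha_i^vee> alpha_i; in the simply
laced case (alpha_i|alpha_i) = 2, so <lambda, alpha_i^vee> = (lambda|alpha_i).\<close>
definition sref :: "real^'k^'k \<Rightarrow> real^'k \<Rightarrow> real^'k \<Rightarrow> real^'k" where
  "sref Gup ai x = x - ip Gup x ai *\<^sub>R ai"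

inductive real_root :: "real^'k^'k \<Rightarrow> ('n \<Rightarrow> real^'k) \<Rightarrow> real^'k \<Rightarrow> bool"
  for Gup :: "real^'k^'k" and alpha :: "'n \<Rightarrow> real^'k" where
  simple: "real_root Gup alpha (alpha i)"
| refl: "real_root Gup alpha x \<Longrightarrow> real_root Gup alpha (sref Gup (alpha i) x)"

definition Xt :: "real^'k^'k \<Rightarrow> real^'k \<Rightarrow> 'k \<Rightarrow> 'k \<Rightarrow> 'k \<Rightarrow> 'k \<Rightarrow> real" where
  "Xt Gup al a b c d =
     (let Gdn = matrix_inv Gup in
      1/2 * al$a * al$b * al$c * al$d
      - 1/4 * (al$a * Gdn$b$c * al$d + al$b * Gdn$a$c * al$d
               + al$a * Gdn$b$d * al$c + al$b * Gdn$a$d * al$c)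
      + 1/4 * (1/2 * (Gdn$a$c * Gdn$d$b + Gdn$a$d * Gdn$c$b)))"

definition contr :: "real^'k^'k \<Rightarrow> ('k \<Rightarrow> 'k \<Rightarrow> 'k \<Rightarrow> 'k \<Rightarrow> real)
     \<Rightarrow> ('k \<Rightarrow> 'k \<Rightarrow> 'k \<Rightarrow> 'k \<Rightarrow> real) \<Rightarrow> 'k \<Rightarrow> 'k \<Rightarrow> 'k \<Rightarrow> 'k \<Rightarrow> real" where
  "contr Gup X Y a b c d =
     (\<Sum>e\<in>UNIV. \<Sum>f\<in>UNIV. \<Sum>g\<in>UNIV. \<Sum>h\<in>UNIV.
        X a b e f * Gup$e$g * Gup$f$h * Y g h c d)"

text \<open>q = q1 (x) q2 evaluated on the spanning elements phi^{ab}_gamma of W (x) S: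
q1(sym(v^a v^b), sym(v^c v^d)) = 1/2 (G^{ac} G^{bd} + G^{ad} G^{bc}), q2(f_g, f_d) = delta.\<close>
definition qgen :: "real^'k^'k \<Rightarrow> 'k \<Rightarrow> 'k \<Rightarrow> 'l \<Rightarrow> 'k \<Rightarrow> 'k \<Rightarrow> 'l \<Rightarrow> real" where
  "qgen Gup a b g c d h =
     (if g = h then 1/2 * (Gup$a$c * Gup$b$d + Gup$a$d * Gup$b$c) else 0)"

definition comm :: "'A::ring \<Rightarrow> 'A \<Rightarrow> 'A" where
  "comm x y = x * y - y * x"

text \<open>Jhat(alpha_i) in an algebra receiving the Clifford generators phi^{ab}_gamma,
with Gamma(alpha_i) = 2 rho(X_i).\<close>
definition Jhat :: "real^'k^'k \<Rightarrow> real^'k \<Rightarrow> real^'l^'l \<Rightarrow> ('k \<Rightarrow> 'k \<Rightarrow> 'l \<Rightarrow> 'A::real_algebra_1) \<Rightarrow> 'A" where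
  "Jhat Gup al rhoi phi =
     (\<Sum>a\<in>UNIV. \<Sum>b\<in>UNIV. \<Sum>c\<in>UNIV. \<Sum>d\<in>UNIV. \<Sum>g\<in>UNIV. \<Sum>h\<in>UNIV.
        (Xt Gup al a b c d * (2 * rhoi$g$h)) *\<^sub>R (phi a b g * phi c d h))"

end

theory Submission
  imports Defs
begin

lemma inv_props:
  fixes G :: "real^'k^'k"
  assumes "invertible G"
  shows "G ** matrix_inv G = mat 1" "matrix_inv G ** G = mat 1"
proof -
  have "\<exists>A'. G ** A' = mat 1 \<and> A' ** G = mat 1" using assms unfolding invertible_def by blast
  hence "G ** matrix_inv G = mat 1 \<and> matrix_inv G ** G = mat 1"
    unfolding matrix_inv_def by (rule someI_ex)
  thus "G ** matrix_inv G = mat 1" "matrix_inv G ** G = mat 1" by auto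
qed

lemma inv_sym:
  fixes G :: "real^'k^'k"
  assumes "invertible G" "transpose G = G"
  shows "transpose (matrix_inv G) = matrix_inv G"
proof -
  let ?N = "matrix_inv G"
  have "transpose ?N ** G = mat 1"
    by (metis assms(2) inv_props(1)[OF assms(1)] matrix_transpose_mul transpose_mat)
  hence "transpose ?N = (transpose ?N ** G) ** ?N"
    by (metis inv_props(1)[OF assms(1)] matrix_mul_assoc matrix_mul_rid)
  thus ?thesis using \<open>transpose ?N ** G = mat 1\<close> by (simp add: matrix_mul_lid)
qed

lemma GN:
  fixes G :: "real^'k^'k"
  assumes "invertible G"
  shows "(\<Sum>g\<in>UNIV. G$e$g * matrix_inv G$g$c) = (if e = c then 1 else 0)"
proof -
  have "(G ** matrix_inv G)$e$c = (if e = c then 1 else 0)"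
    using inv_props(1)[OF assms] by (simp add: mat_def)
  thus ?thesis by (simp add: matrix_matrix_mult_def)
qed

lemma NG:
  fixes G :: "real^'k^'k"
  assumes "invertible G"
  shows "(\<Sum>g\<in>UNIV. matrix_inv G$e$g * G$g$c) = (if e = c then 1 else 0)"
proof -
  have "(matrix_inv G ** G)$e$c = (if e = c then 1 else 0)"
    using inv_props(2)[OF assms] by (simp add: mat_def)
  thus ?thesis by (simp add: matrix_matrix_mult_def)
qed

lemma Nsym:
  fixes G :: "real^'k^'k"
  assumes "invertible G" "transpose G = G"
  shows "matrix_inv G$a$b = matrix_inv G$b$a"
  using inv_sym[OF assms] by (metis transpose_def vec_lambda_beta)

definition mm :: "real^'k^'k \<Rightarrow> ('k \<Rightarrow> 'k \<Rightarrow> real) \<Rightarrow> ('k \<Rightarrow> 'k \<Rightarrow> real) \<Rightarrow> 'k \<Rightarrow> 'k \<Rightarrow> real" where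
  "mm G A C a c = (\<Sum>e\<in>UNIV. \<Sum>g\<in>UNIV. A a e * G$e$g * C g c)"

definition ten :: "('k \<Rightarrow> 'k \<Rightarrow> real) \<Rightarrow> ('k \<Rightarrow> 'k \<Rightarrow> real) \<Rightarrow> 'k \<Rightarrow> 'k \<Rightarrow> 'k \<Rightarrow> 'k \<Rightarrow> real" where
  "ten A B a b c d = A a c * B b d"
definition tens :: "('k \<Rightarrow> 'k \<Rightarrow> real) \<Rightarrow> ('k \<Rightarrow> 'k \<Rightarrow> real) \<Rightarrow> 'k \<Rightarrow> 'k \<Rightarrow> 'k \<Rightarrow> 'k \<Rightarrow> real" where
  "tens A B a b c d = A a d * B b c"

lemma sep4:
  fixes A B C D :: "'k \<Rightarrow> real" and G :: "'k \<Rightarrow> 'k \<Rightarrow> real"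
  shows "(\<Sum>e\<in>UNIV. \<Sum>f\<in>UNIV. \<Sum>g\<in>UNIV. \<Sum>h\<in>UNIV. (A e * B f) * G e g * G f h * (C g * D h))
   = (\<Sum>e\<in>UNIV. \<Sum>g\<in>UNIV. A e * G e g * C g) * (\<Sum>f\<in>UNIV. \<Sum>h\<in>UNIV. B f * G f h * D h)"
proof -
  have "(\<Sum>e\<in>UNIV. \<Sum>g\<in>UNIV. A e * G e g * C g) * (\<Sum>f\<in>UNIV. \<Sum>h\<in>UNIV. B f * G f h * D h)
     = (\<Sum>e\<in>UNIV. \<Sum>g\<in>UNIV. \<Sum>f\<in>UNIV. \<Sum>h\<in>UNIV. (A e * G e g * C g) * (B f * G f h * D h))"
    unfolding sum_distrib_right by (simp add: sum_distrib_left)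
  also have "\<dots> = (\<Sum>e\<in>UNIV. \<Sum>f\<in>UNIV. \<Sum>g\<in>UNIV. \<Sum>h\<in>UNIV. (A e * G e g * C g) * (B f * G f h * D h))"
    by (rule sum.cong[OF HOL.refl], rule sum.swap)
  finally show ?thesis by (simp add: mult_ac)
qed

lemma contr_tt: "contr G (ten A B) (ten C D) a b c d = mm G A C a c * mm G B D b d"
  unfolding contr_def ten_def mm_def
  using sep4[of "\<lambda>e. A a e" "\<lambda>f. B b f" "\<lambda>e g. G$e$g" "\<lambda>g. C g c" "\<lambda>h. D h d"] by simp
lemma contr_st: "contr G (tens A B) (ten C D) a b c d = mm G B C b c * mm G A D a d"
  unfolding contr_def ten_def tens_def mm_def
  using sep4[of "\<lambda>e. B b e" "\<lambda>f. A a f" "\<lambda>e g. G$e$g" "\<lambda>g. C g c" "\<lambda>h. D h d"] by (simp add: mult_ac)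
lemma contr_ts: "contr G (ten A B) (tens C D) a b c d = mm G A C a d * mm G B D b c"
  unfolding contr_def ten_def tens_def mm_def
  using sep4[of "\<lambda>e. A a e" "\<lambda>f. B b f" "\<lambda>e g. G$e$g" "\<lambda>g. C g d" "\<lambda>h. D h c"] by (simp add: mult_ac)
lemma contr_ss: "contr G (tens A B) (tens C D) a b c d = mm G B C b d * mm G A D a c"
  unfolding contr_def ten_def tens_def mm_def
  using sep4[of "\<lambda>e. B b e" "\<lambda>f. A a f" "\<lambda>e g. G$e$g" "\<lambda>g. C g d" "\<lambda>h. D h c"] by (simp add: mult_ac)

lemma if01[simp]: "(x::real) * (if P then 1 else 0) = (if P then x else 0)" "(if P then 1 else 0) * (x::real) = (if P then x else 0)"
  by auto

definition pp :: "real^'k \<Rightarrow> 'k \<Rightarrow> 'k \<Rightarrow> real" where "pp x i j = x$i * x$j"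
definition nn :: "real^'k^'k \<Rightarrow> 'k \<Rightarrow> 'k \<Rightarrow> real" where "nn G i j = matrix_inv G$i$j"

lemma mm_pp_pp: "mm G (pp x) (pp y) a c = x$a * ip G x y * y$c"
  unfolding mm_def pp_def ip_def by (simp add: sum_distrib_left sum_distrib_right mult_ac)

lemma mm_pp_nn: assumes "invertible G" shows "mm G (pp x) (nn G) a c = x$a * x$c"
proof -
  have "mm G (pp x) (nn G) a c = (\<Sum>e\<in>UNIV. x$a * x$e * (\<Sum>g\<in>UNIV. G$e$g * matrix_inv G$g$c))"
    unfolding mm_def pp_def nn_def by (simp add: sum_distrib_left mult_ac)
  also have "\<dots> = (\<Sum>e\<in>UNIV. if e = c then x$a * x$e else 0)" by (simp add: GN[OF assms])
  finally show ?thesis by simp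
qed

lemma mm_nn_pp: assumes "invertible G" shows "mm G (nn G) (pp y) a c = y$a * y$c"
proof -
  have "mm G (nn G) (pp y) a c = (\<Sum>g\<in>UNIV. \<Sum>e\<in>UNIV. matrix_inv G$a$e * G$e$g * (y$g * y$c))"
    unfolding mm_def pp_def nn_def by (rule sum.swap)
  also have "\<dots> = (\<Sum>g\<in>UNIV. (\<Sum>e\<in>UNIV. matrix_inv G$a$e * G$e$g) * (y$g * y$c))"
    by (simp add: sum_distrib_right)
  also have "\<dots> = (\<Sum>g\<in>UNIV. if a = g then y$g * y$c else 0)" by (simp add: NG[OF assms])
  finally show ?thesis by simp
qed

lemma mm_nn_nn: assumes "invertible G" shows "mm G (nn G) (nn G) a c = matrix_inv G$a$c"
proof -
  have "mm G (nn G) (nn G) a c = (\<Sum>e\<in>UNIV. matrix_inv G$a$e * (\<Sum>g\<in>UNIV. G$e$g * matrix_inv G$g$c))"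
    unfolding mm_def nn_def by (simp add: sum_distrib_left mult_ac)
  also have "\<dots> = (\<Sum>e\<in>UNIV. if e = c then matrix_inv G$a$e else 0)" by (simp add: GN[OF assms])
  finally show ?thesis by simp
qed

lemma Xt_sep:
  assumes "invertible G" "transpose G = G"
  shows "Xt G x = (\<lambda>a b c d. 1/2 * ten (pp x) (pp x) a b c d
     - 1/4 * (tens (pp x) (nn G) a b c d + ten (nn G) (pp x) a b c d + ten (pp x) (nn G) a b c d + tens (nn G) (pp x) a b c d)
     + 1/8 * (ten (nn G) (nn G) a b c d + tens (nn G) (nn G) a b c d))"
  apply (rule ext)+
  unfolding Xt_def Let_def ten_def tens_def pp_def nn_def
  using Nsym[OF assms] by (simp add: algebra_simps)

lemma contr_add_l: "contr G (\<lambda>a b c d. X a b c d + Y a b c d) Z a b c d = contr G X Z a b c d + contr G Y Z a b c d"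
  unfolding contr_def by (simp add: algebra_simps sum.distrib)
lemma contr_diff_l: "contr G (\<lambda>a b c d. X a b c d - Y a b c d) Z a b c d = contr G X Z a b c d - contr G Y Z a b c d"
  unfolding contr_def by (simp add: algebra_simps sum_subtractf)
lemma contr_smult_l: "contr G (\<lambda>a b c d. r * X a b c d) Z a b c d = r * contr G X Z a b c d"
  unfolding contr_def by (simp add: algebra_simps sum_distrib_left)
lemma contr_add_r: "contr G Z (\<lambda>a b c d. X a b c d + Y a b c d) a b c d = contr G Z X a b c d + contr G Z Y a b c d"
  unfolding contr_def by (simp add: algebra_simps sum.distrib)
lemma contr_diff_r: "contr G Z (\<lambda>a b c d. X a b c d - Y a b c d) a b c d = contr G Z X a b c d - contr G Z Y a b c d"
  unfolding contr_def by (simp add: algebra_simps sum_subtractf)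
lemma contr_smult_r: "contr G Z (\<lambda>a b c d. r * X a b c d) a b c d = r * contr G Z X a b c d"
  unfolding contr_def by (simp add: algebra_simps sum_distrib_left)

lemmas contr_lin = contr_add_l contr_diff_l contr_smult_l contr_add_r contr_diff_r contr_smult_r

lemma ip_sym: assumes "transpose G = G" shows "ip G x y = ip G y x"
proof -
  have g: "G$a$b = G$b$a" for a b using assms by (metis transpose_def vec_lambda_beta)
  show ?thesis unfolding ip_def using g by (subst sum.swap) (simp add: mult_ac)
qed

lemma key_plus:
  assumes "invertible G" "transpose G = G" "ip G x x = 2" "ip G y y = 2" "ip G x y = -1"
  shows "contr G (Xt G x) (Xt G y) a b c d + contr G (Xt G y) (Xt G x) a b c d = 1/2 * Xt G (x+y) a b c d"
proof -
  have yx: "ip G y x = -1" using assms ip_sym by metis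
  show ?thesis
    apply (simp only: Xt_sep[OF assms(1,2)] contr_lin contr_tt contr_ts contr_st contr_ss
       mm_pp_pp mm_pp_nn[OF assms(1)] mm_nn_pp[OF assms(1)] mm_nn_nn[OF assms(1)] assms(3-5) yx)
    apply (simp add: ten_def tens_def pp_def nn_def algebra_simps)
    done
qed

lemma key_zero:
  assumes "invertible G" "transpose G = G" "ip G x x = 2" "ip G y y = 2" "ip G x y = 0"
  shows "contr G (Xt G x) (Xt G y) a b c d = contr G (Xt G y) (Xt G x) a b c d"
proof -
  have yx: "ip G y x = 0" using assms ip_sym by metis
  show ?thesis
    apply (simp only: Xt_sep[OF assms(1,2)] contr_lin contr_tt contr_ts contr_st contr_ss
       mm_pp_pp mm_pp_nn[OF assms(1)] mm_nn_pp[OF assms(1)] mm_nn_nn[OF assms(1)] assms(3-5) yx)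
    apply (simp add: ten_def tens_def pp_def nn_def algebra_simps)
    done
qed

lemma Xt_neg: "Xt G (-x) = Xt G x"
  by (intro ext) (simp add: Xt_def Let_def)

lemma pairsum: "(\<Sum>g\<in>UNIV. \<Sum>h\<in>UNIV. H g h) = (\<Sum>q\<in>UNIV. H (fst q) (snd q))"
  by (simp add: sum.cartesian_product split_def)

lemma contr_pair: "contr G X Y a b c d = (\<Sum>p\<in>UNIV. \<Sum>q\<in>UNIV.
   X a b (fst p) (snd p) * (G$fst p$fst q * G$snd p$snd q) * Y (fst q) (snd q) c d)"
proof -
  have "contr G X Y a b c d = (\<Sum>e\<in>UNIV. \<Sum>f\<in>UNIV. \<Sum>q\<in>UNIV.
     X a b e f * (G$e$fst q * G$f$snd q) * Y (fst q) (snd q) c d)"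
    unfolding contr_def by (intro sum.cong HOL.refl) (simp add: pairsum mult_ac)
  also have "\<dots> = (\<Sum>p\<in>UNIV. \<Sum>q\<in>UNIV.
   X a b (fst p) (snd p) * (G$fst p$fst q * G$snd p$snd q) * Y (fst q) (snd q) c d)"
    by (rule pairsum)
  finally show ?thesis .
qed

lemma swap22: "(\<Sum>r\<in>A. \<Sum>s\<in>B. \<Sum>p\<in>C. \<Sum>q\<in>D. F r s p q) = (\<Sum>p\<in>C. \<Sum>q\<in>D. \<Sum>r\<in>A. \<Sum>s\<in>B. F r s p q)"
proof -
  have "(\<Sum>r\<in>A. \<Sum>s\<in>B. \<Sum>p\<in>C. \<Sum>q\<in>D. F r s p q) = (\<Sum>r\<in>A. \<Sum>p\<in>C. \<Sum>s\<in>B. \<Sum>q\<in>D. F r s p q)"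
    by (rule sum.cong[OF HOL.refl], rule sum.swap)
  also have "\<dots> = (\<Sum>p\<in>C. \<Sum>r\<in>A. \<Sum>s\<in>B. \<Sum>q\<in>D. F r s p q)" by (rule sum.swap)
  also have "\<dots> = (\<Sum>p\<in>C. \<Sum>r\<in>A. \<Sum>q\<in>D. \<Sum>s\<in>B. F r s p q)"
    by (intro sum.cong[OF HOL.refl] sum.swap)
  also have "\<dots> = (\<Sum>p\<in>C. \<Sum>q\<in>D. \<Sum>r\<in>A. \<Sum>s\<in>B. F r s p q)"
    by (rule sum.cong[OF HOL.refl], rule sum.swap)
  finally show ?thesis .
qed

lemma contr_assoc: "contr G (contr G X Y) Z a b c d = contr G X (contr G Y Z) a b c d"
proof -
  have "contr G (contr G X Y) Z a b c d = (\<Sum>r\<in>UNIV. \<Sum>s\<in>UNIV. \<Sum>p\<in>UNIV. \<Sum>q\<in>UNIV.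
     X a b (fst p) (snd p) * (G$fst p$fst q * G$snd p$snd q) * Y (fst q) (snd q) (fst r) (snd r)
     * (G$fst r$fst s * G$snd r$snd s) * Z (fst s) (snd s) c d)"
    by (simp only: contr_pair[of G "contr G X Y"] contr_pair[of G X] sum_distrib_right)
  also have "\<dots> = (\<Sum>p\<in>UNIV. \<Sum>q\<in>UNIV. \<Sum>r\<in>UNIV. \<Sum>s\<in>UNIV.
     X a b (fst p) (snd p) * (G$fst p$fst q * G$snd p$snd q) * Y (fst q) (snd q) (fst r) (snd r)
     * (G$fst r$fst s * G$snd r$snd s) * Z (fst s) (snd s) c d)"
    by (rule swap22)
  also have "\<dots> = contr G X (contr G Y Z) a b c d"
    by (simp only: contr_pair[of G X "contr G Y Z"] contr_pair[of G Y] sum_distrib_left mult.assoc)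
  finally show ?thesis .
qed

lemma key_minus:
  assumes "invertible G" "transpose G = G" "ip G x x = 2" "ip G y y = 2" "ip G x y = 1"
  shows "contr G (Xt G x) (Xt G y) a b c d + contr G (Xt G y) (Xt G x) a b c d = 1/2 * Xt G (x-y) a b c d"
proof -
  have "ip G (-y) (-y) = 2" "ip G x (-y) = -1" using assms(4,5)
    by (simp_all add: ip_def sum_negf)
  from key_plus[OF assms(1-3) this]
  show ?thesis by (simp add: Xt_neg)
qed

lemma ip_diff_l: "ip G (x - y) z = ip G x z - ip G y z"
  unfolding ip_def by (simp add: algebra_simps sum_subtractf)
lemma ip_diff_r: "ip G z (x - y) = ip G z x - ip G z y"
  unfolding ip_def by (simp add: algebra_simps sum_subtractf)
lemma ip_scale_l: "ip G (r *\<^sub>R x) z = r * ip G x z"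
  unfolding ip_def by (simp add: algebra_simps sum_distrib_left)
lemma ip_scale_r: "ip G z (r *\<^sub>R x) = r * ip G z x"
  unfolding ip_def by (simp add: algebra_simps sum_distrib_left)
lemma ip_add_l: "ip G (x + y) z = ip G x z + ip G y z"
  unfolding ip_def by (simp add: algebra_simps sum.distrib)
lemma ip_add_r: "ip G z (x + y) = ip G z x + ip G z y"
  unfolding ip_def by (simp add: algebra_simps sum.distrib)

lemma root_norm:
  assumes "real_root G alpha x" "\<And>i. ip G (alpha i) (alpha i) = 2" "transpose G = G"
  shows "ip G x x = 2"
  using assms(1)
proof induction
  case (simple i) then show ?case using assms(2) by simp
next
  case (refl x i)
  have s: "ip G (alpha i) x = ip G x (alpha i)" using ip_sym[OF assms(3)] by metis
  show ?case unfolding sref_def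
    by (simp add: ip_diff_l ip_diff_r ip_scale_l ip_scale_r refl.IH assms(2) s algebra_simps)
qed

definition QQ :: "('i::finite \<Rightarrow> 'A::real_algebra_1) \<Rightarrow> ('i \<Rightarrow> 'i \<Rightarrow> real) \<Rightarrow> 'A" where
  "QQ \<phi> M = (\<Sum>I\<in>UNIV. \<Sum>J\<in>UNIV. M I J *\<^sub>R (\<phi> I * \<phi> J))"

definition mq :: "('i::finite \<Rightarrow> 'i \<Rightarrow> real) \<Rightarrow> ('i \<Rightarrow> 'i \<Rightarrow> real) \<Rightarrow> ('i \<Rightarrow> 'i \<Rightarrow> real) \<Rightarrow> 'i \<Rightarrow> 'i \<Rightarrow> real" where
  "mq q M N I L = (\<Sum>J\<in>UNIV. \<Sum>K\<in>UNIV. M I J * q J K * N K L)"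

lemma comm4:
  fixes \<phi> :: "'i \<Rightarrow> 'A::real_algebra_1"
  assumes rel: "\<And>I J. \<phi> I * \<phi> J + \<phi> J * \<phi> I = q I J *\<^sub>R 1"
  shows "comm (\<phi> I * \<phi> J) (\<phi> K * \<phi> L) = q J K *\<^sub>R (\<phi> I * \<phi> L) - q I K *\<^sub>R (\<phi> J * \<phi> L)
           + q J L *\<^sub>R (\<phi> K * \<phi> I) - q I L *\<^sub>R (\<phi> K * \<phi> J)"
proof -
  have r: "\<phi> A * \<phi> B = q A B *\<^sub>R 1 - \<phi> B * \<phi> A" for A B
    using rel[of A B] by (simp add: eq_diff_eq)
  have h1: "\<phi> I * (\<phi> J * (\<phi> K * \<phi> L)) = q J K *\<^sub>R (\<phi> I * \<phi> L) - \<phi> I * (\<phi> K * (\<phi> J * \<phi> L))"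
  proof -
    have "\<phi> I * (\<phi> J * (\<phi> K * \<phi> L)) = \<phi> I * ((\<phi> J * \<phi> K) * \<phi> L)" by (simp add: mult.assoc)
    also have "\<dots> = \<phi> I * ((q J K *\<^sub>R 1 - \<phi> K * \<phi> J) * \<phi> L)" by (simp only: r[of J K])
    finally show ?thesis by (simp add: algebra_simps)
  qed
  have h2: "\<phi> I * (\<phi> K * (\<phi> J * \<phi> L)) = q I K *\<^sub>R (\<phi> J * \<phi> L) - \<phi> K * (\<phi> I * (\<phi> J * \<phi> L))"
  proof -
    have "\<phi> I * (\<phi> K * (\<phi> J * \<phi> L)) = (\<phi> I * \<phi> K) * (\<phi> J * \<phi> L)" by (simp add: mult.assoc)
    also have "\<dots> = (q I K *\<^sub>R 1 - \<phi> K * \<phi> I) * (\<phi> J * \<phi> L)" by (simp only: r[of I K])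
    finally show ?thesis by (simp add: algebra_simps)
  qed
  have h3: "\<phi> K * (\<phi> I * (\<phi> J * \<phi> L)) = q J L *\<^sub>R (\<phi> K * \<phi> I) - \<phi> K * (\<phi> I * (\<phi> L * \<phi> J))"
  proof -
    have "\<phi> K * (\<phi> I * (\<phi> J * \<phi> L)) = \<phi> K * (\<phi> I * (q J L *\<^sub>R 1 - \<phi> L * \<phi> J))" by (simp only: r[of J L])
    thus ?thesis by (simp add: algebra_simps)
  qed
  have h4: "\<phi> K * (\<phi> I * (\<phi> L * \<phi> J)) = q I L *\<^sub>R (\<phi> K * \<phi> J) - \<phi> K * (\<phi> L * (\<phi> I * \<phi> J))"
  proof -
    have "\<phi> K * (\<phi> I * (\<phi> L * \<phi> J)) = \<phi> K * ((\<phi> I * \<phi> L) * \<phi> J)" by (simp add: mult.assoc)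
    also have "\<dots> = \<phi> K * ((q I L *\<^sub>R 1 - \<phi> L * \<phi> I) * \<phi> J)" by (simp only: r[of I L])
    finally show ?thesis by (simp add: algebra_simps)
  qed
  have "comm (\<phi> I * \<phi> J) (\<phi> K * \<phi> L) = \<phi> I * (\<phi> J * (\<phi> K * \<phi> L)) - \<phi> K * (\<phi> L * (\<phi> I * \<phi> J))"
    by (simp add: comm_def mult.assoc)
  also have "\<dots> = q J K *\<^sub>R (\<phi> I * \<phi> L) - (q I K *\<^sub>R (\<phi> J * \<phi> L) - (q J L *\<^sub>R (\<phi> K * \<phi> I)
        - (q I L *\<^sub>R (\<phi> K * \<phi> J) - \<phi> K * (\<phi> L * (\<phi> I * \<phi> J))))) - \<phi> K * (\<phi> L * (\<phi> I * \<phi> J))"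
    by (simp only: h1 h2 h3 h4)
  finally show ?thesis by (simp add: algebra_simps)
qed

lemma sw3: "(\<Sum>a\<in>A. \<Sum>b\<in>B. \<Sum>c\<in>C. f a b c) = (\<Sum>c\<in>C. \<Sum>a\<in>A. \<Sum>b\<in>B. f a b c)"
proof -
  have "(\<Sum>a\<in>A. \<Sum>b\<in>B. \<Sum>c\<in>C. f a b c) = (\<Sum>a\<in>A. \<Sum>c\<in>C. \<Sum>b\<in>B. f a b c)"
    by (rule sum.cong[OF HOL.refl], rule sum.swap)
  also have "\<dots> = (\<Sum>c\<in>C. \<Sum>a\<in>A. \<Sum>b\<in>B. f a b c)" by (rule sum.swap)
  finally show ?thesis .
qed

lemma sw3': "(\<Sum>a\<in>A. \<Sum>b\<in>B. \<Sum>c\<in>C. f a b c) = (\<Sum>b\<in>B. \<Sum>c\<in>C. \<Sum>a\<in>A. f a b c)"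
proof -
  have "(\<Sum>a\<in>A. \<Sum>b\<in>B. \<Sum>c\<in>C. f a b c) = (\<Sum>b\<in>B. \<Sum>a\<in>A. \<Sum>c\<in>C. f a b c)"
    by (rule sum.swap)
  also have "\<dots> = (\<Sum>b\<in>B. \<Sum>c\<in>C. \<Sum>a\<in>A. f a b c)" by (rule sum.cong[OF HOL.refl], rule sum.swap)
  finally show ?thesis .
qed

lemma QQ_mult: "QQ \<phi> M * QQ \<phi> N = (\<Sum>I\<in>UNIV. \<Sum>J\<in>UNIV. \<Sum>K\<in>UNIV. \<Sum>L\<in>UNIV.
    (M I J * N K L) *\<^sub>R (\<phi> I * \<phi> J * (\<phi> K * \<phi> L)))"
  unfolding QQ_def sum_distrib_right by (simp add: sum_distrib_left mult_ac)

lemma comm_QQ4: "comm (QQ \<phi> M) (QQ \<phi> N) = (\<Sum>I\<in>UNIV. \<Sum>J\<in>UNIV. \<Sum>K\<in>UNIV. \<Sum>L\<in>UNIV.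
    (M I J * N K L) *\<^sub>R comm (\<phi> I * \<phi> J) (\<phi> K * \<phi> L))"
proof -
  have "QQ \<phi> N * QQ \<phi> M = (\<Sum>K\<in>UNIV. \<Sum>L\<in>UNIV. \<Sum>I\<in>UNIV. \<Sum>J\<in>UNIV.
    (N K L * M I J) *\<^sub>R (\<phi> K * \<phi> L * (\<phi> I * \<phi> J)))" by (rule QQ_mult)
  also have "\<dots> = (\<Sum>I\<in>UNIV. \<Sum>J\<in>UNIV. \<Sum>K\<in>UNIV. \<Sum>L\<in>UNIV.
    (N K L * M I J) *\<^sub>R (\<phi> K * \<phi> L * (\<phi> I * \<phi> J)))" by (rule swap22)
  finally have e: "QQ \<phi> N * QQ \<phi> M = \<dots>" .
  have "comm (QQ \<phi> M) (QQ \<phi> N) = QQ \<phi> M * QQ \<phi> N - QQ \<phi> N * QQ \<phi> M" by (simp add: comm_def)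
  also have "\<dots> = (\<Sum>I\<in>UNIV. \<Sum>J\<in>UNIV. \<Sum>K\<in>UNIV. \<Sum>L\<in>UNIV.
    (M I J * N K L) *\<^sub>R (\<phi> I * \<phi> J * (\<phi> K * \<phi> L))) - (\<Sum>I\<in>UNIV. \<Sum>J\<in>UNIV. \<Sum>K\<in>UNIV. \<Sum>L\<in>UNIV.
    (N K L * M I J) *\<^sub>R (\<phi> K * \<phi> L * (\<phi> I * \<phi> J)))"
    by (simp only: QQ_mult[of \<phi> M N] e)
  also have "\<dots> = (\<Sum>I\<in>UNIV. \<Sum>J\<in>UNIV. \<Sum>K\<in>UNIV. \<Sum>L\<in>UNIV.
    (M I J * N K L) *\<^sub>R comm (\<phi> I * \<phi> J) (\<phi> K * \<phi> L))"
    by (simp add: sum_subtractf[symmetric] scaleR_diff_right mult_ac comm_def mult.assoc)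
  finally show ?thesis .
qed

lemma QQ_add: "QQ \<phi> (\<lambda>I J. A I J + B I J) = QQ \<phi> A + QQ \<phi> B"
  unfolding QQ_def by (simp add: scaleR_add_left sum.distrib)
lemma QQ_diff: "QQ \<phi> (\<lambda>I J. A I J - B I J) = QQ \<phi> A - QQ \<phi> B"
  unfolding QQ_def by (simp add: scaleR_diff_left sum_subtractf)
lemma QQ_smult: "QQ \<phi> (\<lambda>I J. r * A I J) = r *\<^sub>R QQ \<phi> A"
  unfolding QQ_def by (simp add: scaleR_sum_right)
lemma QQ_neg: "QQ \<phi> (\<lambda>I J. - A I J) = - QQ \<phi> A"
  unfolding QQ_def by (simp add: sum_negf)
lemma QQ_zero: "QQ \<phi> (\<lambda>I J. 0) = 0"
  unfolding QQ_def by simp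

lemma mq_neg_l: "mq q (\<lambda>a b. - M a b) N = (\<lambda>I L. - mq q M N I L)"
  unfolding mq_def by (intro ext) (simp add: sum_negf)
lemma mq_neg_r: "mq q N (\<lambda>a b. - M a b) = (\<lambda>I L. - mq q N M I L)"
  unfolding mq_def by (intro ext) (simp add: sum_negf)

lemma comm_QQ:
  fixes \<phi> :: "'i::finite \<Rightarrow> 'A::real_algebra_1"
  assumes rel: "\<And>I J. \<phi> I * \<phi> J + \<phi> J * \<phi> I = q I J *\<^sub>R 1"
    and qsym: "\<And>I J. q I J = q J I"
    and anti: "\<And>I J. M J I = - M I J"
  shows "comm (QQ \<phi> M) (QQ \<phi> N) = QQ \<phi> (\<lambda>I L. 2 * mq q M N I L - 2 * mq q N M I L)"
proof -
  have Mt: "(\<lambda>a b. M b a) = (\<lambda>a b. - M a b)" by (intro ext) (rule anti)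
  have qt: "(\<lambda>a b. q b a) = q" by (intro ext) (rule qsym)
  have s1: "(\<Sum>I\<in>UNIV. \<Sum>J\<in>UNIV. \<Sum>K\<in>UNIV. \<Sum>L\<in>UNIV. (M I J * N K L * q J K) *\<^sub>R (\<phi> I * \<phi> L))
     = QQ \<phi> (mq q M N)"
  proof -
    have "(\<Sum>I\<in>UNIV. \<Sum>J\<in>UNIV. \<Sum>K\<in>UNIV. \<Sum>L\<in>UNIV. (M I J * N K L * q J K) *\<^sub>R (\<phi> I * \<phi> L))
       = (\<Sum>I\<in>UNIV. \<Sum>L\<in>UNIV. \<Sum>J\<in>UNIV. \<Sum>K\<in>UNIV. (M I J * N K L * q J K) *\<^sub>R (\<phi> I * \<phi> L))"
      by (rule sum.cong[OF HOL.refl], rule sw3)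
    thus ?thesis by (simp add: QQ_def mq_def scaleR_sum_left mult_ac)
  qed
  have s2: "(\<Sum>I\<in>UNIV. \<Sum>J\<in>UNIV. \<Sum>K\<in>UNIV. \<Sum>L\<in>UNIV. (M I J * N K L * q I K) *\<^sub>R (\<phi> J * \<phi> L))
     = - QQ \<phi> (mq q M N)"
  proof -
    have "(\<Sum>I\<in>UNIV. \<Sum>J\<in>UNIV. \<Sum>K\<in>UNIV. \<Sum>L\<in>UNIV. (M I J * N K L * q I K) *\<^sub>R (\<phi> J * \<phi> L))
       = (\<Sum>J\<in>UNIV. \<Sum>I\<in>UNIV. \<Sum>K\<in>UNIV. \<Sum>L\<in>UNIV. (M I J * N K L * q I K) *\<^sub>R (\<phi> J * \<phi> L))"
      by (rule sum.swap)
    also have "\<dots> = (\<Sum>J\<in>UNIV. \<Sum>L\<in>UNIV. \<Sum>I\<in>UNIV. \<Sum>K\<in>UNIV. (M I J * N K L * q I K) *\<^sub>R (\<phi> J * \<phi> L))"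
      by (rule sum.cong[OF HOL.refl], rule sw3)
    also have "\<dots> = QQ \<phi> (mq q (\<lambda>a b. M b a) N)"
      by (simp add: QQ_def mq_def scaleR_sum_left mult_ac)
    finally show ?thesis by (simp add: Mt mq_neg_l QQ_neg)
  qed
  have s3: "(\<Sum>I\<in>UNIV. \<Sum>J\<in>UNIV. \<Sum>K\<in>UNIV. \<Sum>L\<in>UNIV. (M I J * N K L * q J L) *\<^sub>R (\<phi> K * \<phi> I))
     = - QQ \<phi> (mq q N M)"
  proof -
    have "(\<Sum>I\<in>UNIV. \<Sum>J\<in>UNIV. \<Sum>K\<in>UNIV. \<Sum>L\<in>UNIV. (M I J * N K L * q J L) *\<^sub>R (\<phi> K * \<phi> I))
       = (\<Sum>K\<in>UNIV. \<Sum>I\<in>UNIV. \<Sum>J\<in>UNIV. \<Sum>L\<in>UNIV. (M I J * N K L * q J L) *\<^sub>R (\<phi> K * \<phi> I))"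
      by (rule sw3)
    also have "\<dots> = (\<Sum>K\<in>UNIV. \<Sum>I\<in>UNIV. \<Sum>L\<in>UNIV. \<Sum>J\<in>UNIV. (M I J * N K L * q J L) *\<^sub>R (\<phi> K * \<phi> I))"
      by (rule sum.cong[OF HOL.refl], rule sum.cong[OF HOL.refl], rule sum.swap)
    also have "\<dots> = QQ \<phi> (mq (\<lambda>a b. q b a) N (\<lambda>a b. M b a))"
      by (simp add: QQ_def mq_def scaleR_sum_left mult_ac)
    finally show ?thesis by (simp add: Mt qt mq_neg_r QQ_neg)
  qed
  have s4: "(\<Sum>I\<in>UNIV. \<Sum>J\<in>UNIV. \<Sum>K\<in>UNIV. \<Sum>L\<in>UNIV. (M I J * N K L * q I L) *\<^sub>R (\<phi> K * \<phi> J))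
     = QQ \<phi> (mq q N M)"
  proof -
    have "(\<Sum>I\<in>UNIV. \<Sum>J\<in>UNIV. \<Sum>K\<in>UNIV. \<Sum>L\<in>UNIV. (M I J * N K L * q I L) *\<^sub>R (\<phi> K * \<phi> J))
       = (\<Sum>K\<in>UNIV. \<Sum>I\<in>UNIV. \<Sum>J\<in>UNIV. \<Sum>L\<in>UNIV. (M I J * N K L * q I L) *\<^sub>R (\<phi> K * \<phi> J))"
      by (rule sw3)
    also have "\<dots> = (\<Sum>K\<in>UNIV. \<Sum>J\<in>UNIV. \<Sum>L\<in>UNIV. \<Sum>I\<in>UNIV. (M I J * N K L * q I L) *\<^sub>R (\<phi> K * \<phi> J))"
      by (rule sum.cong[OF HOL.refl], rule sw3')
    also have "\<dots> = QQ \<phi> (mq (\<lambda>a b. q b a) N M)"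
      by (simp add: QQ_def mq_def scaleR_sum_left mult_ac)
    finally show ?thesis by (simp add: qt)
  qed
  have "comm (QQ \<phi> M) (QQ \<phi> N) =
     (\<Sum>I\<in>UNIV. \<Sum>J\<in>UNIV. \<Sum>K\<in>UNIV. \<Sum>L\<in>UNIV. (M I J * N K L * q J K) *\<^sub>R (\<phi> I * \<phi> L))
   - (\<Sum>I\<in>UNIV. \<Sum>J\<in>UNIV. \<Sum>K\<in>UNIV. \<Sum>L\<in>UNIV. (M I J * N K L * q I K) *\<^sub>R (\<phi> J * \<phi> L))
   + (\<Sum>I\<in>UNIV. \<Sum>J\<in>UNIV. \<Sum>K\<in>UNIV. \<Sum>L\<in>UNIV. (M I J * N K L * q J L) *\<^sub>R (\<phi> K * \<phi> I))
   - (\<Sum>I\<in>UNIV. \<Sum>J\<in>UNIV. \<Sum>K\<in>UNIV. \<Sum>L\<in>UNIV. (M I J * N K L * q I L) *\<^sub>R (\<phi> K * \<phi> J))"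
    unfolding comm_QQ4
    by (simp add: comm4[of \<phi> q, OF rel] scaleR_diff_right scaleR_add_right sum.distrib sum_subtractf scaleR_scaleR)
  also have "\<dots> = QQ \<phi> (\<lambda>I L. 2 * mq q M N I L - 2 * mq q N M I L)"
    unfolding s1 s2 s3 s4 QQ_diff QQ_smult by (simp add: scaleR_2)
  finally show ?thesis .
qed

lemma mult_if0[simp]: "(x::real) * (if P then y else 0) = (if P then x * y else 0)"
  "(if P then y else 0) * (x::real) = (if P then y * x else 0)" by auto

lemma sum3: "(\<Sum>I\<in>(UNIV::('a::finite \<times> 'b::finite \<times> 'c::finite) set). f I) = (\<Sum>a\<in>UNIV. \<Sum>b\<in>UNIV. \<Sum>c\<in>UNIV. f (a,b,c))"
proof -
  have "(\<Sum>a\<in>UNIV. \<Sum>b\<in>UNIV. \<Sum>c\<in>UNIV. f (a,b,c)) = (\<Sum>a\<in>UNIV. \<Sum>p\<in>UNIV \<times> UNIV. f (a,p))"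
    by (simp add: sum.cartesian_product split_def)
  also have "\<dots> = (\<Sum>p\<in>UNIV \<times> (UNIV \<times> UNIV). f p)"
    by (simp add: sum.cartesian_product split_def)
  finally show ?thesis by simp
qed

definition TT :: "('k \<Rightarrow> 'k \<Rightarrow> 'k \<Rightarrow> 'k \<Rightarrow> real) \<Rightarrow> real^'l^'l \<Rightarrow> ('k \<times> 'k \<times> 'l) \<Rightarrow> ('k \<times> 'k \<times> 'l) \<Rightarrow> real" where
  "TT X M I J = X (fst I) (fst (snd I)) (fst J) (fst (snd J)) * M $ snd (snd I) $ snd (snd J)"

definition q3 :: "real^'k^'k \<Rightarrow> ('k \<times> 'k \<times> 'l) \<Rightarrow> ('k \<times> 'k \<times> 'l) \<Rightarrow> real" where
  "q3 G I J = qgen G (fst I) (fst (snd I)) (snd (snd I)) (fst J) (fst (snd J)) (snd (snd J))"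

definition phi3 :: "('k \<Rightarrow> 'k \<Rightarrow> 'l \<Rightarrow> 'A) \<Rightarrow> ('k \<times> 'k \<times> 'l) \<Rightarrow> 'A" where
  "phi3 \<phi> I = \<phi> (fst I) (fst (snd I)) (snd (snd I))"

lemma Jhat_QQ: "Jhat G al r \<phi> = QQ (phi3 \<phi>) (TT (Xt G al) (2 *\<^sub>R r))"
proof -
  have "Jhat G al r \<phi> = (\<Sum>a\<in>UNIV. \<Sum>b\<in>UNIV. \<Sum>g\<in>UNIV. \<Sum>c\<in>UNIV. \<Sum>d\<in>UNIV. \<Sum>h\<in>UNIV.
        (Xt G al a b c d * (2 * r$g$h)) *\<^sub>R (\<phi> a b g * \<phi> c d h))"
    unfolding Jhat_def by (rule sum.cong[OF HOL.refl], rule sum.cong[OF HOL.refl], rule sw3)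
  thus ?thesis by (simp add: QQ_def sum3 TT_def phi3_def)
qed

lemma mq_TT:
  fixes X Y :: "'k::finite \<Rightarrow> 'k \<Rightarrow> 'k \<Rightarrow> 'k \<Rightarrow> real" and M M' :: "real^'l::finite^'l"
  assumes Xs: "\<And>a b c d. X a b c d = X a b d c"
  shows "mq (q3 G) (TT X M) (TT Y M') = TT (contr G X Y) (M ** M')"
proof (intro ext)
  fix I L :: "'k \<times> 'k \<times> 'l"
  obtain a b g where I: "I = (a,b,g)" by (cases I) auto
  obtain a' b' g' where L: "L = (a',b',g')" by (cases L) auto
  define T1 where "T1 = (\<Sum>c\<in>UNIV. \<Sum>d\<in>UNIV. \<Sum>h\<in>UNIV. \<Sum>e\<in>UNIV. \<Sum>f\<in>UNIV.
      X a b c d * M$g$h * (G$c$e * G$d$f) * Y e f a' b' * M'$h$g')"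
  define T2 where "T2 = (\<Sum>c\<in>UNIV. \<Sum>d\<in>UNIV. \<Sum>h\<in>UNIV. \<Sum>e\<in>UNIV. \<Sum>f\<in>UNIV.
      X a b c d * M$g$h * (G$c$f * G$d$e) * Y e f a' b' * M'$h$g')"
  have 1: "mq (q3 G) (TT X M) (TT Y M') I L = 1/2 * T1 + 1/2 * T2"
    unfolding I L mq_def TT_def q3_def sum3 qgen_def T1_def T2_def
    by (simp add: algebra_simps sum.distrib sum_distrib_left)
  have "T2 = (\<Sum>d\<in>UNIV. \<Sum>c\<in>UNIV. \<Sum>h\<in>UNIV. \<Sum>e\<in>UNIV. \<Sum>f\<in>UNIV.
      X a b c d * M$g$h * (G$c$f * G$d$e) * Y e f a' b' * M'$h$g')"
    unfolding T2_def by (rule sum.swap)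
  also have "\<dots> = T1" unfolding T1_def
    by (intro sum.cong HOL.refl) (simp add: Xs[of a b] mult_ac)
  finally have 2: "T2 = T1" .
  have 3: "T1 = TT (contr G X Y) (M ** M') I L"
  proof -
    have "TT (contr G X Y) (M ** M') I L = (\<Sum>c\<in>UNIV. \<Sum>d\<in>UNIV. \<Sum>e\<in>UNIV. \<Sum>f\<in>UNIV. \<Sum>h\<in>UNIV.
      X a b c d * M$g$h * (G$c$e * G$d$f) * Y e f a' b' * M'$h$g')"
      unfolding I L TT_def contr_def matrix_matrix_mult_def
      by (simp add: sum_distrib_left sum_distrib_right mult_ac)
    also have "\<dots> = T1" unfolding T1_def
      by (rule sum.cong[OF HOL.refl], rule sum.cong[OF HOL.refl], rule sw3)
    finally show ?thesis by simp
  qed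
  show "mq (q3 G) (TT X M) (TT Y M') I L = TT (contr G X Y) (M ** M') I L"
    using 1 2 3 by simp
qed

lemma mq_lin_r: "mq q M (\<lambda>I L. r * A I L - s * B I L) = (\<lambda>I L. r * mq q M A I L - s * mq q M B I L)"
  unfolding mq_def by (intro ext) (simp add: algebra_simps sum_subtractf sum_distrib_left)
lemma mq_lin_l: "mq q (\<lambda>I L. r * A I L - s * B I L) M = (\<lambda>I L. r * mq q A M I L - s * mq q B M I L)"
  unfolding mq_def by (intro ext) (simp add: algebra_simps sum_subtractf sum_distrib_left)

lemma mat_sub_l: "(A::real^'n^'m) ** (B - C) = A ** B - A ** C"
  by (simp add: matrix_matrix_mult_def vec_eq_iff algebra_simps sum_subtractf)
lemma mat_sub_r: "((A::real^'n^'m) - B) ** C = A ** C - B ** C"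
  by (simp add: matrix_matrix_mult_def vec_eq_iff algebra_simps sum_subtractf)
lemma mat_scale: "((c::real) *\<^sub>R (A::real^'n^'m)) ** (d *\<^sub>R B) = (c * d) *\<^sub>R (A ** B)"
  by (simp add: matrix_matrix_mult_def vec_eq_iff algebra_simps sum_distrib_left)

lemma Xt_sym34:
  assumes "invertible G" "transpose G = G"
  shows "Xt G x a b c d = Xt G x a b d c"
  unfolding Xt_def Let_def using Nsym[OF assms] by (simp add: algebra_simps)
lemma Xt_swap:
  assumes "invertible G" "transpose G = G"
  shows "Xt G x c d a b = Xt G x a b c d"
  unfolding Xt_def Let_def using Nsym[OF assms] by (simp add: algebra_simps)

lemma contr_sym34:
  assumes "\<And>g h c d. Y g h c d = Y g h d c"
  shows "contr G X Y a b c d = contr G X Y a b d c"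
  unfolding contr_def by (simp add: assms[of _ _ c d])

theorem proposition6p3:
  fixes A :: "real^'n^'n"
    and Gup :: "real^'k^'k"
    and alpha :: "'n \<Rightarrow> real^'k"
    and rho :: "'n \<Rightarrow> real^'l^'l"
  assumes A_diag: "\<And>i. A$i$i = 2"
    and A_off: "\<And>i j. i \<noteq> j \<Longrightarrow> A$i$j = 0 \<or> A$i$j = -1"
    and A_gcm: "\<And>i j. A$i$j = 0 \<longleftrightarrow> A$j$i = 0"
    and dim_h: "CARD('k) = 2 * CARD('n) - rank A"
    and G_sym: "transpose Gup = Gup"
    and G_nondeg: "invertible Gup"
    and alpha_indep: "vec.independent (range alpha)" and alpha_inj: "inj alpha"
    and alpha_form: "\<And>i j. ip Gup (alpha i) (alpha j) = A$i$j"
    and rho_antisym: "\<And>i. transpose (rho i) = - rho i"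
    and rho_sq: "\<And>i. rho i ** rho i = - (1/4) *\<^sub>R mat 1"
    and rho_rel1: "\<And>i j. A$i$j = -1 \<Longrightarrow>
                     rho i ** (rho i ** rho j - rho j ** rho i)
                     - (rho i ** rho j - rho j ** rho i) ** rho i = - rho j"
    and rho_rel0: "\<And>i j. A$i$j = 0 \<Longrightarrow> rho i ** rho j - rho j ** rho i = 0"
  shows
    "(\<forall>al be. real_root Gup alpha al \<and> real_root Gup alpha be \<and> ip Gup al be = 0 \<longrightarrow>
        (\<forall>a b c d. contr Gup (Xt Gup al) (Xt Gup be) a b c d
                   - contr Gup (Xt Gup be) (Xt Gup al) a b c d = 0))
   \<and> (\<forall>al be. real_root Gup alpha al \<and> real_root Gup alpha be \<and> ip Gup al be = -1 \<longrightarrow>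
        (\<forall>a b c d. contr Gup (Xt Gup al) (Xt Gup be) a b c d
                   + contr Gup (Xt Gup be) (Xt Gup al) a b c d
                   = 1/2 * Xt Gup (al + be) a b c d))
   \<and> (\<forall>al be. real_root Gup alpha al \<and> real_root Gup alpha be \<and> ip Gup al be = 1 \<longrightarrow>
        (\<forall>a b c d. contr Gup (Xt Gup al) (Xt Gup be) a b c d
                   + contr Gup (Xt Gup be) (Xt Gup al) a b c d
                   = 1/2 * Xt Gup (al - be) a b c d))
   \<and> (\<forall>phi :: 'k \<Rightarrow> 'k \<Rightarrow> 'l \<Rightarrow> 'A::real_algebra_1.
        (\<forall>a b g. phi a b g = phi b a g) \<and>
        (\<forall>a b g c d h. phi a b g * phi c d h + phi c d h * phi a b g
                        = qgen Gup a b g c d h *\<^sub>R 1) \<longrightarrow>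
        (\<forall>i j. A$i$j = -1 \<longrightarrow>
            comm (Jhat Gup (alpha i) (rho i) phi)
                 (comm (Jhat Gup (alpha i) (rho i) phi) (Jhat Gup (alpha j) (rho j) phi))
            = - Jhat Gup (alpha j) (rho j) phi) \<and>
        (\<forall>i j. A$i$j = 0 \<longrightarrow>
            comm (Jhat Gup (alpha i) (rho i) phi) (Jhat Gup (alpha j) (rho j) phi) = 0))"
proof -
  have Gs: "\<And>a b. Gup$a$b = Gup$b$a" using G_sym by (metis transpose_def vec_lambda_beta)
  have ns: "\<And>i. ip Gup (alpha i) (alpha i) = 2" using alpha_form A_diag by simp
  have rn: "\<And>x. real_root Gup alpha x \<Longrightarrow> ip Gup x x = 2" using root_norm ns G_sym by blast
  have P1: "\<forall>al be. real_root Gup alpha al \<and> real_root Gup alpha be \<and> ip Gup al be = 0 \<longrightarrow>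
        (\<forall>a b c d. contr Gup (Xt Gup al) (Xt Gup be) a b c d
                   - contr Gup (Xt Gup be) (Xt Gup al) a b c d = 0)"
  proof (intro allI impI)
    fix al be a b c d
    assume h: "real_root Gup alpha al \<and> real_root Gup alpha be \<and> ip Gup al be = 0"
    have "contr Gup (Xt Gup al) (Xt Gup be) a b c d = contr Gup (Xt Gup be) (Xt Gup al) a b c d"
      using h by (intro key_zero[OF G_nondeg G_sym] rn) auto
    thus "contr Gup (Xt Gup al) (Xt Gup be) a b c d - contr Gup (Xt Gup be) (Xt Gup al) a b c d = 0" by simp
  qed
  have P2: "\<forall>al be. real_root Gup alpha al \<and> real_root Gup alpha be \<and> ip Gup al be = -1 \<longrightarrow>
        (\<forall>a b c d. contr Gup (Xt Gup al) (Xt Gup be) a b c d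
                   + contr Gup (Xt Gup be) (Xt Gup al) a b c d
                   = 1/2 * Xt Gup (al + be) a b c d)"
    using key_plus[OF G_nondeg G_sym] rn by simp
  have P3: "\<forall>al be. real_root Gup alpha al \<and> real_root Gup alpha be \<and> ip Gup al be = 1 \<longrightarrow>
        (\<forall>a b c d. contr Gup (Xt Gup al) (Xt Gup be) a b c d
                   + contr Gup (Xt Gup be) (Xt Gup al) a b c d
                   = 1/2 * Xt Gup (al - be) a b c d)"
    using key_minus[OF G_nondeg G_sym] rn by simp
  have P4: "\<forall>phi :: 'k \<Rightarrow> 'k \<Rightarrow> 'l \<Rightarrow> 'A::real_algebra_1.
        (\<forall>a b g. phi a b g = phi b a g) \<and>
        (\<forall>a b g c d h. phi a b g * phi c d h + phi c d h * phi a b g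
                        = qgen Gup a b g c d h *\<^sub>R 1) \<longrightarrow>
        (\<forall>i j. A$i$j = -1 \<longrightarrow>
            comm (Jhat Gup (alpha i) (rho i) phi)
                 (comm (Jhat Gup (alpha i) (rho i) phi) (Jhat Gup (alpha j) (rho j) phi))
            = - Jhat Gup (alpha j) (rho j) phi) \<and>
        (\<forall>i j. A$i$j = 0 \<longrightarrow>
            comm (Jhat Gup (alpha i) (rho i) phi) (Jhat Gup (alpha j) (rho j) phi) = 0)"
  proof (intro allI impI)
    fix phi :: "'k \<Rightarrow> 'k \<Rightarrow> 'l \<Rightarrow> 'A::real_algebra_1"
    assume hp: "(\<forall>a b g. phi a b g = phi b a g) \<and>
        (\<forall>a b g c d h. phi a b g * phi c d h + phi c d h * phi a b g
                        = qgen Gup a b g c d h *\<^sub>R 1)"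
    have rel: "\<And>I J. phi3 phi I * phi3 phi J + phi3 phi J * phi3 phi I = q3 Gup I J *\<^sub>R 1"
      using hp unfolding phi3_def q3_def by blast
    have qs: "\<And>I J. q3 Gup I J = q3 Gup J I"
      unfolding q3_def qgen_def using Gs by (auto simp: mult_ac)
    define X where "X i = Xt Gup (alpha i)" for i
    define Gm where "Gm i = (2::real) *\<^sub>R rho i" for i
    define M where "M i = TT (X i) (Gm i)" for i
    have J: "\<And>i. Jhat Gup (alpha i) (rho i) phi = QQ (phi3 phi) (M i)"
      by (simp add: Jhat_QQ M_def X_def Gm_def)
    have ranti: "rho i $ h $ g = - (rho i $ g $ h)" for i g h
    proof -
      have "(transpose (rho i))$g$h = (- rho i)$g$h" using rho_antisym[of i] by simp
      thus ?thesis by (simp add: transpose_def)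
    qed
    have anti: "\<And>i I J. M i J I = - M i I J"
      subgoal for i I J
        by (simp add: M_def TT_def X_def Gm_def Xt_swap[OF G_nondeg G_sym] ranti[of i "snd (snd I)" "snd (snd J)"])
      done
    have Xs: "\<And>i a b c d. X i a b c d = X i a b d c"
      unfolding X_def by (rule Xt_sym34[OF G_nondeg G_sym])
    have commQ: "comm (QQ (phi3 phi) (M i)) (QQ (phi3 phi) N) =
        QQ (phi3 phi) (\<lambda>I L. 2 * mq (q3 Gup) (M i) N I L - 2 * mq (q3 Gup) N (M i) I L)" for i N
      by (rule comm_QQ[OF rel qs anti])
    have mqM: "mq (q3 Gup) (M i) (M j) = TT (contr Gup (X i) (X j)) (Gm i ** Gm j)" for i j
      unfolding M_def by (rule mq_TT[OF Xs[of i]])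
    have sq: "\<And>i. rho i ** rho i = (- (1/4)) *\<^sub>R mat 1" using rho_sq by simp
    show "(\<forall>i j. A$i$j = -1 \<longrightarrow>
            comm (Jhat Gup (alpha i) (rho i) phi)
                 (comm (Jhat Gup (alpha i) (rho i) phi) (Jhat Gup (alpha j) (rho j) phi))
            = - Jhat Gup (alpha j) (rho j) phi) \<and>
        (\<forall>i j. A$i$j = 0 \<longrightarrow>
            comm (Jhat Gup (alpha i) (rho i) phi) (Jhat Gup (alpha j) (rho j) phi) = 0)"
    proof (intro conjI allI impI)
      fix i j assume aij: "A$i$j = -1"
      have ij: "ip Gup (alpha i) (alpha j) = -1" by (simp add: alpha_form aij)
      have ji: "ip Gup (alpha j) (alpha i) = -1" using ij ip_sym[OF G_sym] by metis
      have nsum: "ip Gup (alpha i + alpha j) (alpha i + alpha j) = 2"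
        by (simp add: ip_add_l ip_add_r ns ij ji)
      have isum: "ip Gup (alpha i) (alpha i + alpha j) = 1"
        by (simp add: ip_add_r ns ij)
      have e1: "rho i ** (rho i ** rho j) = (- (1/4)) *\<^sub>R rho j"
        by (simp only: matrix_mul_assoc sq scalar_matrix_assoc[symmetric] matrix_mul_lid)
      have e2: "rho j ** (rho i ** rho i) = (- (1/4)) *\<^sub>R rho j"
        by (simp only: sq matrix_scalar_ac matrix_mul_rid)
      have rr: "rho i ** (rho j ** rho i) = (1/4) *\<^sub>R rho j"
      proof -
        have h0: "rho i ** (rho i ** rho j) - rho i ** (rho j ** rho i)
             - (rho i ** (rho j ** rho i) - rho j ** (rho i ** rho i)) = - rho j"
          using rho_rel1[OF aij] by (simp add: mat_sub_l mat_sub_r matrix_mul_assoc)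
        have h1: "(- (1/4)) *\<^sub>R rho j - rho i ** (rho j ** rho i)
             - (rho i ** (rho j ** rho i) - (- (1/4)) *\<^sub>R rho j) = - rho j"
          using h0 unfolding e1 e2 .
        have "\<forall>g h. (rho i ** (rho j ** rho i))$g$h = ((1/4) *\<^sub>R rho j)$g$h"
        proof (intro allI)
          fix g h
          have "((- (1/4)) *\<^sub>R rho j - rho i ** (rho j ** rho i)
             - (rho i ** (rho j ** rho i) - (- (1/4)) *\<^sub>R rho j))$g$h = (- rho j)$g$h"
            using h1 by simp
          thus "(rho i ** (rho j ** rho i))$g$h = ((1/4) *\<^sub>R rho j)$g$h" by (simp; linarith)
        qed
        thus ?thesis by (simp add: vec_eq_iff)
      qed
      have E1: "Gm i ** (Gm i ** Gm j) = - Gm j"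
        unfolding Gm_def by (simp add: mat_scale e1)
      have E2: "Gm i ** (Gm j ** Gm i) = Gm j"
        unfolding Gm_def by (simp add: mat_scale rr)
      have E3: "(Gm i ** Gm j) ** Gm i = Gm j"
        unfolding Gm_def by (simp add: mat_scale rr matrix_mul_assoc[symmetric])
      have E4: "(Gm j ** Gm i) ** Gm i = - Gm j"
        unfolding Gm_def by (simp add: mat_scale matrix_mul_assoc[symmetric] e2)
      have S: "contr Gup (X i) (contr Gup (X i) (X j)) a b c d + contr Gup (X i) (contr Gup (X j) (X i)) a b c d
          + contr Gup (contr Gup (X i) (X j)) (X i) a b c d + contr Gup (contr Gup (X j) (X i)) (X i) a b c d
          = 1/4 * X j a b c d" for a b c d
      proof -
        have f: "(\<lambda>a b c d. contr Gup (X i) (X j) a b c d + contr Gup (X j) (X i) a b c d)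
            = (\<lambda>a b c d. 1/2 * Xt Gup (alpha i + alpha j) a b c d)"
          by (intro ext) (simp add: X_def key_plus[OF G_nondeg G_sym ns ns ij])
        have "contr Gup (X i) (contr Gup (X i) (X j)) a b c d + contr Gup (X i) (contr Gup (X j) (X i)) a b c d
           = contr Gup (X i) (\<lambda>a b c d. contr Gup (X i) (X j) a b c d + contr Gup (X j) (X i) a b c d) a b c d"
          by (simp only: contr_add_r)
        also have "\<dots> = 1/2 * contr Gup (X i) (Xt Gup (alpha i + alpha j)) a b c d"
          by (simp only: f contr_smult_r)
        finally have l1: "contr Gup (X i) (contr Gup (X i) (X j)) a b c d + contr Gup (X i) (contr Gup (X j) (X i)) a b c d
           = 1/2 * contr Gup (X i) (Xt Gup (alpha i + alpha j)) a b c d" .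
        have "contr Gup (contr Gup (X i) (X j)) (X i) a b c d + contr Gup (contr Gup (X j) (X i)) (X i) a b c d
           = contr Gup (\<lambda>a b c d. contr Gup (X i) (X j) a b c d + contr Gup (X j) (X i) a b c d) (X i) a b c d"
          by (simp only: contr_add_l)
        also have "\<dots> = 1/2 * contr Gup (Xt Gup (alpha i + alpha j)) (X i) a b c d"
          by (simp only: f contr_smult_l)
        finally have l2: "contr Gup (contr Gup (X i) (X j)) (X i) a b c d + contr Gup (contr Gup (X j) (X i)) (X i) a b c d
           = 1/2 * contr Gup (Xt Gup (alpha i + alpha j)) (X i) a b c d" .
        have km: "contr Gup (X i) (Xt Gup (alpha i + alpha j)) a b c d + contr Gup (Xt Gup (alpha i + alpha j)) (X i) a b c d
            = 1/2 * X j a b c d"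
          using key_minus[OF G_nondeg G_sym ns nsum isum, of a b c d]
          by (simp add: X_def Xt_neg)
        show ?thesis using l1 l2 km by simp
      qed
      have cs1: "\<And>a b c d. contr Gup (X i) (X j) a b c d = contr Gup (X i) (X j) a b d c"
        by (rule contr_sym34) (rule Xs)
      have cs2: "\<And>a b c d. contr Gup (X j) (X i) a b c d = contr Gup (X j) (X i) a b d c"
        by (rule contr_sym34) (rule Xs)
      define C where "C = (\<lambda>I L. 2 * TT (contr Gup (X i) (X j)) (Gm i ** Gm j) I L
                               - 2 * TT (contr Gup (X j) (X i)) (Gm j ** Gm i) I L)"
      have c1: "comm (QQ (phi3 phi) (M i)) (QQ (phi3 phi) (M j)) = QQ (phi3 phi) C"
        by (simp add: commQ mqM C_def)
      have mC1: "mq (q3 Gup) (M i) C = (\<lambda>I L.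
          2 * TT (contr Gup (X i) (contr Gup (X i) (X j))) (Gm i ** (Gm i ** Gm j)) I L
        - 2 * TT (contr Gup (X i) (contr Gup (X j) (X i))) (Gm i ** (Gm j ** Gm i)) I L)"
        unfolding C_def mq_lin_r unfolding M_def mq_TT[OF Xs[of i]] ..
      have mC2: "mq (q3 Gup) C (M i) = (\<lambda>I L.
          2 * TT (contr Gup (contr Gup (X i) (X j)) (X i)) ((Gm i ** Gm j) ** Gm i) I L
        - 2 * TT (contr Gup (contr Gup (X j) (X i)) (X i)) ((Gm j ** Gm i) ** Gm i) I L)"
        unfolding C_def mq_lin_l unfolding M_def mq_TT[OF cs1] mq_TT[OF cs2] ..
      have fe: "(\<lambda>I L. 2 * mq (q3 Gup) (M i) C I L - 2 * mq (q3 Gup) C (M i) I L) = (\<lambda>I L. - M j I L)"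
      proof (intro ext)
        fix I L :: "'k \<times> 'k \<times> 'l"
        obtain a b g where I: "I = (a,b,g)" by (cases I) auto
        obtain a' b' g' where L: "L = (a',b',g')" by (cases L) auto
        define y where "y = Gm j $ g $ g'"
        have "2 * mq (q3 Gup) (M i) C I L - 2 * mq (q3 Gup) C (M i) I L
          = - 4 * (contr Gup (X i) (contr Gup (X i) (X j)) a b a' b' + contr Gup (X i) (contr Gup (X j) (X i)) a b a' b'
          + contr Gup (contr Gup (X i) (X j)) (X i) a b a' b' + contr Gup (contr Gup (X j) (X i)) (X i) a b a' b') * y"
          unfolding mC1 mC2 E1 E2 E3 E4 I L TT_def y_def by (simp add: algebra_simps)
        also have "\<dots> = - M j I L" unfolding S I L M_def TT_def y_def by simp
        finally show "2 * mq (q3 Gup) (M i) C I L - 2 * mq (q3 Gup) C (M i) I L = - M j I L" .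
      qed
      show "comm (Jhat Gup (alpha i) (rho i) phi)
                 (comm (Jhat Gup (alpha i) (rho i) phi) (Jhat Gup (alpha j) (rho j) phi))
            = - Jhat Gup (alpha j) (rho j) phi"
      proof -
        have "comm (Jhat Gup (alpha i) (rho i) phi)
                 (comm (Jhat Gup (alpha i) (rho i) phi) (Jhat Gup (alpha j) (rho j) phi))
            = comm (QQ (phi3 phi) (M i)) (QQ (phi3 phi) C)" by (simp only: J c1)
        also have "\<dots> = QQ (phi3 phi) (\<lambda>I L. 2 * mq (q3 Gup) (M i) C I L - 2 * mq (q3 Gup) C (M i) I L)"
          by (rule commQ)
        also have "\<dots> = QQ (phi3 phi) (\<lambda>I L. - M j I L)" by (simp only: fe)
        also have "\<dots> = - Jhat Gup (alpha j) (rho j) phi" by (simp only: QQ_neg J)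
        finally show ?thesis .
      qed
    next
      fix i j assume aij: "A$i$j = 0"
      have ij: "ip Gup (alpha i) (alpha j) = 0" by (simp add: alpha_form aij)
      have cc: "contr Gup (X i) (X j) a b c d = contr Gup (X j) (X i) a b c d" for a b c d
        unfolding X_def by (rule key_zero[OF G_nondeg G_sym ns ns ij])
      have rc: "rho i ** rho j = rho j ** rho i" using rho_rel0[OF aij] by simp
      have gc: "Gm i ** Gm j = Gm j ** Gm i" unfolding Gm_def by (simp add: mat_scale rc)
      have fe: "(\<lambda>I L. 2 * mq (q3 Gup) (M i) (M j) I L - 2 * mq (q3 Gup) (M j) (M i) I L) = (\<lambda>I L. 0)"
        by (intro ext) (simp add: mqM TT_def cc gc)
      show "comm (Jhat Gup (alpha i) (rho i) phi) (Jhat Gup (alpha j) (rho j) phi) = 0"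
        unfolding J commQ fe QQ_zero ..
    qed
  qed
  show ?thesis using P1 P2 P3 P4 by blast
qed

end
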